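(* Let $k=\mathbb{F}_q$ with $q$ a power of $2$. Let $S$ be the set of monic irreducible polynomials of degree $7$ in $k[x]$ of the form $x^7+ax^3+bx+c$ with $a,b,c\in k$, let $S_0\subseteq S$ be those dividing $x^{q^3}+x^q+x$, and $S_1\subseteq S$ those dividing $x^{q^3}+x^{q^2}+x$. Then $$(x^{q^3}+x^q+x)(x^{q^3}+x^{q^2}+x)=x^2\prod_{f\in S}f(x),$$ and $|S_0|=|S_1|=(q^3-1)/7$. *)

theory Defs
  imports "HOL-Computational_Algebra.Polynomial" "HOL-Computational_Algebra.Polynomial_Factorial"
begin

definition S_set :: "'a::field poly set" where
  "S_set = {f. irreducible f \<and>
     (\<exists>a b c. f = monom 1 7 + monom a 3 + monom b 1 + [:c:])}"

definition P0 :: "nat \<Rightarrow> 'a::field poly" where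
  "P0 q = monom 1 (q^3) + monom 1 q + monom 1 1"

definition P1 :: "nat \<Rightarrow> 'a::field poly" where
  "P1 q = monom 1 (q^3) + monom 1 (q^2) + monom 1 1"

end

theory Submission
  imports Defs "HOL-Algebra.Algebraic_Closure_Type" "HOL-Number_Theory.Residues"
begin


hide_const (open) UnivPoly.coeff UnivPoly.monom Divisibility.prime Divisibility.irreducible Polynomials.degree Polynomials.lead_coeff module.smult

lemma char2_add_self:
  fixes x :: "'b::comm_ring_1"
  assumes "CHAR('b) = 2" shows "x + x = 0"
proof -
  have "(2::'b) = of_nat CHAR('b)" using assms by simp
  also have "\<dots> = 0" by simp
  finally have "(2::'b) = 0" .
  hence "2 * x = 0" by simp
  thus ?thesis by (simp only: mult_2)
qed

lemma char2_minus:
  fixes x :: "'b::comm_ring_1"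
  assumes "CHAR('b) = 2" shows "- x = x"
  using char2_add_self[OF assms, of x] by (simp only: neg_eq_iff_add_eq_0)

lemma char2_diff:
  fixes x :: "'b::comm_ring_1"
  assumes "CHAR('b) = 2" shows "x - y = x + y"
  by (simp only: diff_conv_add_uminus char2_minus[OF assms])

lemma fr_add:
  fixes x :: "'b::comm_ring_1"
  assumes "CHAR('b) = 2" shows "(x + y) ^ (2^k) = x^(2^k) + y^(2^k)"
  by (rule freshmans_dream') (use assms in auto)

lemma fr_sum:
  fixes f :: "'c \<Rightarrow> 'b::comm_ring_1"
  assumes "CHAR('b) = 2" shows "(sum f A) ^ (2^k) = (\<Sum>i\<in>A. f i ^ (2^k))"
  by (rule freshmans_dream_sum') (use assms in auto)

lemma fr_inj:
  fixes x :: "'b::field"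
  assumes "CHAR('b) = 2" "x^(2^k) = y^(2^k)" shows "x = y"
proof -
  have "(x+y)^(2^k) = x^(2^k) + y^(2^k)" by (rule fr_add[OF assms(1)])
  also have "\<dots> = y^(2^k) + y^(2^k)" using assms(2) by (simp only:)
  also have "\<dots> = 0" by (rule char2_add_self[OF assms(1)])
  finally have "(x+y)^(2^k) = 0" .
  hence "x + y = 0" by simp
  hence "- x = y" by (simp only: neg_eq_iff_add_eq_0)
  thus ?thesis using char2_minus[OF assms(1), of x] by (simp only:)
qed

lemma card_char2:
  assumes "card (UNIV :: 'a::{field,finite} set) = 2^m" shows "CHAR('a) = 2"
proof -
  have pos: "CHAR('a) > 0" by (simp add: finite_imp_CHAR_pos)
  have pr: "normalization_semidom_class.prime CHAR('a)" using prime_CHAR_semidom[OF pos] .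
  have "CHAR('a) dvd 2^m" using CHAR_dvd_CARD[where 'a='a] assms by simp
  hence "CHAR('a) dvd 2" using pr prime_dvd_power by blast
  hence "CHAR('a) \<le> 2" by (rule dvd_imp_le) simp
  moreover have "CHAR('a) > 1" using pr prime_gt_1_nat by blast
  ultimately show ?thesis by linarith
qed

lemma fermat_ff:
  fixes x :: "'a::{field,finite}"
  shows "x ^ card (UNIV :: 'a set) = x"
proof (cases "x = 0")
  case False
  define U where "U = (UNIV - {0} :: 'a set)"
  have fU: "finite U" by simp
  have cU: "card U = card (UNIV :: 'a set) - 1" unfolding U_def
    by (simp add: card_Diff_singleton)
  have P0: "(\<Prod>y\<in>U. y) \<noteq> 0" using fU by (simp add: U_def)
  have "(\<Prod>y\<in>U. x * y) = x ^ card U * (\<Prod>y\<in>U. y)"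
    by (simp add: prod.distrib)
  moreover have "(\<Prod>y\<in>U. x * y) = (\<Prod>y\<in>U. y)"
    unfolding U_def
    by (rule prod.reindex_bij_witness[of _ "\<lambda>y. y / x" "\<lambda>y. x * y"]) (use False in auto)
  ultimately have "x ^ card U * (\<Prod>y\<in>U. y) = 1 * (\<Prod>y\<in>U. y)" by simp
  hence 1: "x ^ card U = 1" using P0 by (simp only: mult_cancel_right) simp
  have "card (UNIV :: 'a set) = Suc (card U)"
    using cU finite_UNIV_card_ge_0[where ?'a = 'a] by simp
  thus ?thesis using 1 by simp
qed (use finite_UNIV_card_ge_0[where ?'a = 'a] in auto)

lemma fermat_ff_pow:
  fixes x :: "'a::{field,finite}"
  shows "x ^ (card (UNIV :: 'a set)^k) = x"
  by (induction k) (simp_all add: fermat_ff power_mult)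


abbreviation ac :: "'a::field poly \<Rightarrow> 'a alg_closure poly" where
  "ac p \<equiv> map_poly to_ac p"

lemma coeff_ac: "coeff (ac p) n = to_ac (coeff p n)"
  by (simp add: coeff_map_poly)

lemma ac_add: "ac (p + q) = ac p + ac q"
  by (rule poly_eqI) (simp add: coeff_ac)

lemma ac_mult: "ac (p * q) = ac p * ac q"
  by (rule poly_eqI) (simp add: coeff_ac coeff_mult to_ac_sum)

lemma ac_1: "ac 1 = 1"
  by simp

lemma ac_prod: "ac (\<Prod>x\<in>A. f x) = (\<Prod>x\<in>A. ac (f x))"
  by (induction A rule: infinite_finite_induct) (simp_all add: ac_mult)

lemma ac_pow: "ac (p ^ n) = ac p ^ n"
  by (induction n) (simp_all add: ac_mult)

lemma ac_const: "ac [:c:] = [:to_ac c:]"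
  by (rule poly_eqI) (simp add: coeff_ac coeff_pCons split: nat.splits)

lemma ac_monom: "ac (monom c n) = monom (to_ac c) n"
  by (simp add: map_poly_monom)

lemma ac_inj: "ac p = ac q \<Longrightarrow> p = q"
  by (rule poly_eqI) (metis coeff_ac to_ac_eq_iff)

lemma degree_ac [simp]: "degree (ac p) = degree p"
  by (rule degree_map_poly) simp

lemma lead_coeff_ac: "lead_coeff (ac p) = to_ac (lead_coeff p)"
  by (simp add: coeff_ac)

lemma ac_eq_0_iff [simp]: "ac p = 0 \<longleftrightarrow> p = 0"
  by (metis ac_inj map_poly_0)

lemma poly_ac_to_ac: "poly (ac p) (to_ac x) = to_ac (poly p x)"
  by (induction p) (simp_all add: map_poly_pCons)

lemma ac_dvd: "p dvd r \<Longrightarrow> ac p dvd ac r"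
  by (metis ac_mult dvd_def)


lemma hom_sum_gen:
  assumes "h 0 = 0" "\<And>a b. h (a+b) = h a + h b"
  shows "h (sum g A) = (\<Sum>x\<in>A. h (g x))"
  by (induction A rule: infinite_finite_induct) (simp_all add: assms)

lemma map_poly_hom_mult:
  fixes h :: "'b::comm_ring_1 \<Rightarrow> 'b"
  assumes "h 0 = 0" "\<And>a b. h (a+b) = h a + h b" "\<And>a b. h (a*b) = h a * h b"
  shows "map_poly h (p * r) = map_poly h p * map_poly h r"
  by (rule poly_eqI) (simp add: coeff_map_poly assms coeff_mult hom_sum_gen[of h, OF assms(1,2)])

lemma map_poly_hom_prod:
  fixes h :: "'b::comm_ring_1 \<Rightarrow> 'b"
  assumes "h 0 = 0" "h 1 = 1" "\<And>a b. h (a+b) = h a + h b" "\<And>a b. h (a*b) = h a * h b"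
  shows "map_poly h (\<Prod>x\<in>A. g x) = (\<Prod>x\<in>A. map_poly h (g x))"
  by (induction A rule: infinite_finite_induct) (simp_all add: assms map_poly_hom_mult)

lemma minpoly_exists:
  fixes z :: "'a::field alg_closure" and g :: "'a poly"
  assumes "g \<noteq> 0" "poly (ac g) z = 0"
  shows "\<exists>h. irreducible h \<and> lead_coeff h = 1 \<and> poly (ac h) z = 0 \<and> (\<forall>p. poly (ac p) z = 0 \<longrightarrow> h dvd p)"
proof -
  define P where "P = (\<lambda>n. \<exists>h::'a poly. h \<noteq> 0 \<and> poly (ac h) z = 0 \<and> degree h = n)"
  have "P (degree g)" unfolding P_def using assms by blast
  define n0 where "n0 = (LEAST n. P n)"
  have "P n0" unfolding n0_def by (rule LeastI) fact
  then obtain h0 where h0: "h0 \<noteq> 0" "poly (ac h0) z = 0" "degree h0 = n0" unfolding P_def by blast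
  have mini: "n0 \<le> degree h" if "h \<noteq> 0" "poly (ac h) z = 0" for h
    unfolding n0_def by (rule Least_le) (use that in \<open>auto simp: P_def\<close>)
  define h where "h = smult (inverse (lead_coeff h0)) h0"
  have lc0: "lead_coeff h0 \<noteq> 0" using h0(1) by simp
  have hnz: "h \<noteq> 0" unfolding h_def using h0 lc0 by simp
  have hroot: "poly (ac h) z = 0" unfolding h_def using h0
    by (simp add: map_poly_smult)
  have hdeg: "degree h = n0" unfolding h_def using h0 lc0 by simp
  have hlc: "lead_coeff h = 1" unfolding h_def using lc0 by simp
  have hdvd: "h dvd p" if "poly (ac p) z = 0" for p
  proof -
    define r where "r = p mod h"
    have "p = p div h * h + r" unfolding r_def by simp
    hence "ac p = ac (p div h) * ac h + ac r" by (metis ac_add ac_mult)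
    hence rroot: "poly (ac r) z = 0" using that hroot by (metis add_0 mult_zero_right poly_add poly_mult)
    have "r = 0"
    proof (rule ccontr)
      assume "r \<noteq> 0"
      hence "degree r < degree h" unfolding r_def using hnz degree_mod_less' by blast
      moreover have "n0 \<le> degree r" using mini[OF \<open>r \<noteq> 0\<close> rroot] .
      ultimately show False using hdeg by simp
    qed
    thus ?thesis unfolding r_def by (simp add: dvd_eq_mod_eq_0)
  qed
  have hirr: "irreducible h"
  proof (rule Factorial_Ring.irreducibleI)
    show "h \<noteq> 0" by fact
    show "\<not> h dvd 1"
    proof
      assume "h dvd 1"
      hence "degree h = 0" using hnz is_unit_iff_degree by blast
      hence "h = [:lead_coeff h:]" by (metis degree_eq_zeroE coeff_pCons_0 lead_coeff_pCons(1) pCons_0_0)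
      hence "h = 1" using hlc by simp
      thus False using hroot by simp
    qed
  next
    fix a b assume ab: "h = a * b"
    hence a0: "a \<noteq> 0" and b0: "b \<noteq> 0" using hnz by auto
    have dab: "degree h = degree a + degree b" using ab a0 b0 by (simp add: degree_mult_eq)
    have "poly (ac a) z * poly (ac b) z = 0" using hroot ab by (simp add: ac_mult)
    hence "poly (ac a) z = 0 \<or> poly (ac b) z = 0" by simp
    thus "a dvd 1 \<or> b dvd 1"
    proof
      assume "poly (ac a) z = 0"
      hence "n0 \<le> degree a" using mini a0 by blast
      hence "degree b = 0" using dab hdeg by simp
      thus ?thesis using b0 is_unit_iff_degree by blast
    next
      assume "poly (ac b) z = 0"
      hence "n0 \<le> degree b" using mini b0 by blast
      hence "degree a = 0" using dab hdeg by simp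
      thus ?thesis using a0 is_unit_iff_degree by blast
    qed
  qed
  show ?thesis using hirr hlc hroot hdvd by blast
qed

lemma irr_common_root_dvd:
  fixes f p :: "'a::field poly"
  assumes "irreducible f" "poly (ac f) z = 0" "poly (ac p) z = 0"
  shows "f dvd p"
proof -
  have f0: "f \<noteq> 0" using assms(1) by auto
  obtain h where h: "irreducible h" "poly (ac h) z = 0" "\<forall>p. poly (ac p) z = 0 \<longrightarrow> h dvd p"
    using minpoly_exists[OF f0 assms(2)] by blast
  obtain k where k: "f = h * k" using h(3) assms(2) by blast
  have "\<not> h dvd 1" using h(1) Factorial_Ring.irreducible_not_unit by blast
  hence "k dvd 1" using Factorial_Ring.irreducibleD[OF assms(1) k] by blast
  hence "f dvd p \<longleftrightarrow> h dvd p" using k by (simp add: mult_unit_dvd_iff)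
  thus ?thesis using h(3) assms(3) by blast
qed

lemma shape_ring:
  fixes Y a b c :: "'r::comm_ring_1"
  shows "(Y+a)*(Y+b)*(Y+c)*(Y+(a+b))*(Y+(b+c))*(Y+(a+b+c))*(Y+(a+c)) =
    Y^7 + ((a^2+a*b+b^2)^2 + (c^4 + (a^2+a*b+b^2)*c^2 + (a^2*b+a*b^2)*c)) * Y^3
    + ((a^2*b+a*b^2)^2 + (a^2+a*b+b^2)*(c^4 + (a^2+a*b+b^2)*c^2 + (a^2*b+a*b^2)*c)) * Y
    + (a^2*b+a*b^2)*(c^4 + (a^2+a*b+b^2)*c^2 + (a^2*b+a*b^2)*c)
    + 2 * (a*b^3*c^3 + 2*a^2*b^2*c^3 + a^2*b^3*c^2 + a^3*b*c^3 + a^3*b^2*c^2 + Y*b^3*c^3 + Y*a*b*c^4 + 6*Y*a*b^2*c^3 + 5*Y*a*b^3*c^2 + Y*a*b^4*c + 6*Y*a^2*b*c^3 + 10*Y*a^2*b^2*c^2 + 5*Y*a^2*b^3*c + Y*a^3*c^3 + 5*Y*a^3*b*c^2 + 5*Y*a^3*b^2*c + Y*a^4*b*c + Y^2*b*c^4 + 4*Y^2*b^2*c^3 + 4*Y^2*b^3*c^2 + Y^2*b^4*c + Y^2*a*c^4 + 10*Y^2*a*b*c^3 + 19*Y^2*a*b^2*c^2 + 10*Y^2*a*b^3*c + Y^2*a*b^4 + 4*Y^2*a^2*c^3 + 19*Y^2*a^2*b*c^2 + 19*Y^2*a^2*b^2*c + 4*Y^2*a^2*b^3 + 4*Y^2*a^3*c^2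 + 10*Y^2*a^3*b*c + 4*Y^2*a^3*b^2 + Y^2*a^4*c + Y^2*a^4*b + 5*Y^3*b*c^3 + 9*Y^3*b^2*c^2 + 5*Y^3*b^3*c + 5*Y^3*a*c^3 + 22*Y^3*a*b*c^2 + 22*Y^3*a*b^2*c + 4*Y^3*a*b^3 + 9*Y^3*a^2*c^2 + 22*Y^3*a^2*b*c + 8*Y^3*a^2*b^2 + 5*Y^3*a^3*c + 4*Y^3*a^3*b + 2*Y^4*c^3 + 9*Y^4*b*c^2 + 9*Y^4*b^2*c + 2*Y^4*b^3 + 9*Y^4*a*c^2 + 21*Y^4*a*b*c + 9*Y^4*a*b^2 + 9*Y^4*a^2*c + 9*Y^4*a^2*b + 2*Y^4*a^3 + 3*Y^5*c^2 + 7*Y^5*b*c + 3*Y^5*b^2 + 7*Y^5*a*c + 7*Y^5*a*b + 3*Y^5*a^2 + 2*Y^6*c + 2*Y^6*b + 2*Y^6*a)"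
  by (simp add: algebra_simps eval_nat_numeral)

lemma pc_add: "[:x + y:] = [:x:] + [:y:]" by simp
lemma pc_mult: "[:x * y:] = [:x:] * [:y:]" by (simp add: mult.commute)
lemma pc_pow: "[:x ^ n:] = [:x:] ^ n" by (induction n) (simp_all add: pc_mult)

locale fq =
  fixes m q :: nat and ty :: "'a::{field,finite} itself"
  assumes card0: "card (UNIV :: 'a set) = 2 ^ m"
  and q_def: "q = card (UNIV :: 'a set)"
begin

lemma card: "q = 2 ^ m" using card0 q_def by simp

lemma charF: "CHAR('a) = 2"
  using card_char2[OF card0] .

lemma charK: "CHAR('a alg_closure) = 2"
  using charF by simp

lemma q_ge2: "q \<ge> 2"
proof -
  have "{0, 1::'a} \<subseteq> UNIV" by simp
  hence "card {0, 1::'a} \<le> q" unfolding q_def by (intro card_mono) auto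
  thus ?thesis by simp
qed

lemma m_pos: "m > 0"
  using q_ge2 card by (cases m) auto

lemma q_pow: "q ^ k = 2 ^ (m * k)"
  by (simp add: card power_mult)

lemma frK_add: "((x::'a alg_closure) + y) ^ (q ^ k) = x ^ (q ^ k) + y ^ (q ^ k)"
  unfolding q_pow by (rule fr_add[OF charK])

lemma frK_sum: "(sum (f :: 'c \<Rightarrow> 'a alg_closure) A) ^ (q ^ k) = (\<Sum>i\<in>A. f i ^ (q ^ k))"
  unfolding q_pow by (rule fr_sum[OF charK])

lemma frK_inj: "(x::'a alg_closure) ^ (q ^ k) = y ^ (q ^ k) \<Longrightarrow> x = y"
  unfolding q_pow by (rule fr_inj[OF charK])

lemma K_add_self: "(x::'a alg_closure) + x = 0"
  by (rule char2_add_self[OF charK])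

lemma K_minus: "- (x::'a alg_closure) = x"
  by (rule char2_minus[OF charK])

lemma K_diff: "(x::'a alg_closure) - y = x + y"
  by (rule char2_diff[OF charK])

lemma F_add_self: "(x::'a) + x = 0"
  by (rule char2_add_self[OF charF])

lemma to_ac_pow_q: "to_ac (c::'a) ^ (q ^ k) = to_ac c"
  by (metis fermat_ff_pow to_ac_power q_def)

lemma poly_ac_frob:
  fixes p :: "'a poly"
  shows "poly (ac p) (z ^ (q ^ k)) = (poly (ac p) z) ^ (q ^ k)"
proof -
  have "(poly (ac p) z) ^ (q ^ k) = (\<Sum>i\<le>degree p. (to_ac (coeff p i) * z ^ i) ^ (q ^ k))"
    using frK_sum[of "\<lambda>i. to_ac (coeff p i) * z ^ i" "{..degree p}" k] by (simp add: poly_altdef coeff_ac)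
  also have "\<dots> = (\<Sum>i\<le>degree p. to_ac (coeff p i) * (z ^ (q ^ k)) ^ i)"
    by (intro sum.cong refl) (simp add: power_mult_distrib to_ac_pow_q flip: power_mult, simp add: mult.commute)
  also have "\<dots> = poly (ac p) (z ^ (q ^ k))"
    by (simp add: poly_altdef coeff_ac)
  finally show ?thesis by simp
qed

lemma fixed_in_F:
  assumes "(z :: 'a alg_closure) ^ q = z"
  shows "z \<in> range to_ac"
proof -
  define p :: "'a alg_closure poly" where "p = monom 1 q + monom 1 1"
  have dp: "degree p = q" unfolding p_def using q_ge2
    by (subst degree_add_eq_left) (auto simp: degree_monom_eq)
  hence p0: "p \<noteq> 0" using q_ge2 by auto
  define R where "R = {x. poly p x = 0}"
  have fR: "finite R" unfolding R_def using p0 by (rule poly_roots_finite)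
  have cR: "card R \<le> q" unfolding R_def using card_poly_roots_bound[OF p0] dp by simp
  have sub: "range to_ac \<subseteq> R"
    unfolding R_def p_def by (auto simp: poly_monom fermat_ff q_def K_add_self simp flip: to_ac_power)
  have "card (range (to_ac :: 'a \<Rightarrow> _)) = q"
    using card_image[OF inj_to_ac] by (simp add: q_def)
  hence "range to_ac = R" using card_subset_eq[OF fR sub] cR card_mono[OF fR sub] by simp
  moreover have "z \<in> R" unfolding R_def p_def using assms by (simp add: poly_monom K_add_self)
  ultimately show ?thesis by simp
qed


lemma Zpow: "((z::'a alg_closure) ^ (q ^ i)) ^ (q ^ j) = z ^ (q ^ (i + j))"
  by (simp add: power_mult power_add mult.commute)

lemma Zperiod:
  assumes "(z::'a alg_closure) ^ (q ^ n) = z"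
  shows "z ^ (q ^ (k * n + j)) = z ^ (q ^ j)"
proof (induction k)
  case (Suc k)
  have "z ^ (q ^ (Suc k * n + j)) = (z ^ (q ^ n)) ^ (q ^ (k * n + j))"
    by (simp add: Zpow algebra_simps)
  also have "\<dots> = z ^ (q ^ j)" using assms Suc by simp
  finally show ?case .
qed simp

lemma root_orbit:
  fixes f :: "'a poly"
  assumes "poly (ac f) z = 0"
  shows "poly (ac f) (z ^ (q ^ i)) = 0"
  using assms q_ge2 by (simp add: poly_ac_frob)

lemma Zdistinct:
  assumes "\<forall>i. 0 < i \<and> i < n \<longrightarrow> (z::'a alg_closure) ^ (q ^ i) \<noteq> z"
  shows "inj_on (\<lambda>i. z ^ (q ^ i)) {..<n}"
proof (rule inj_onI)
  fix i j assume ij: "i \<in> {..<n}" "j \<in> {..<n}" "z ^ (q ^ i) = z ^ (q ^ j)"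
  show "i = j"
  proof (rule ccontr)
    assume "i \<noteq> j"
    then consider "i < j" | "j < i" by linarith
    thus False
    proof cases
      case 1
      have "(z ^ (q ^ (j - i))) ^ (q ^ i) = z ^ (q ^ i)" using ij(3) 1 by (simp add: Zpow)
      hence "z ^ (q ^ (j - i)) = z" by (rule frK_inj)
      thus False using assms 1 ij by auto
    next
      case 2
      have "(z ^ (q ^ (i - j))) ^ (q ^ j) = z ^ (q ^ j)" using ij(3) 2 by (simp add: Zpow)
      hence "z ^ (q ^ (i - j)) = z" by (rule frK_inj)
      thus False using assms 2 ij by auto
    qed
  qed
qed

lemma frob_hom:
  shows "(0::'a alg_closure) ^ q = 0" "(1::'a alg_closure) ^ q = 1"
    "\<And>a b::'a alg_closure. (a + b) ^ q = a ^ q + b ^ q"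
    "\<And>a b::'a alg_closure. (a * b) ^ q = a ^ q * b ^ q"
  using q_ge2 frK_add[of _ _ 1] by (auto simp: power_mult_distrib)

lemma orbit:
  fixes f :: "'a poly"
  assumes irr: "irreducible f" and root: "poly (ac f) z = 0"
  and n: "n > 0" "z ^ (q ^ n) = z" "\<forall>i. 0 < i \<and> i < n \<longrightarrow> z ^ (q ^ i) \<noteq> z"
  shows "degree f = n \<and> ac f = smult (to_ac (lead_coeff f)) (\<Prod>i<n. [:- (z ^ (q ^ i)), 1:])"
proof -
  define Z where "Z = (\<lambda>i. z ^ (q ^ i))"
  define g where "g = (\<Prod>i<n. [:- Z i, 1:])"
  have f0: "f \<noteq> 0" using irr by auto
  have inj: "inj_on Z {..<n}" unfolding Z_def using Zdistinct[OF n(3)] .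
  have "Z ` {..<n} \<subseteq> {x. poly (ac f) x = 0}" unfolding Z_def using root_orbit[OF root] by auto
  hence "card (Z ` {..<n}) \<le> card {x. poly (ac f) x = 0}"
    using f0 by (intro card_mono poly_roots_finite) auto
  also have "\<dots> \<le> degree f" using card_poly_roots_bound[of "ac f"] f0 by simp
  finally have ge: "n \<le> degree f" using card_image[OF inj] by simp
  have g0: "g \<noteq> 0" unfolding g_def by auto
  have dg: "degree g = n" unfolding g_def by (subst degree_prod_sum_eq) auto
  have lg: "lead_coeff g = 1" unfolding g_def by (simp add: lead_coeff_prod)
  have "map_poly (\<lambda>c. c ^ q) g = (\<Prod>i<n. map_poly (\<lambda>c. c ^ q) [:- Z i, 1:])"
    unfolding g_def by (rule map_poly_hom_prod) (use frob_hom in auto)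
  also have "\<dots> = (\<Prod>i<n. [:- Z (Suc i), 1:])"
    by (intro prod.cong refl) (simp add: map_poly_pCons frob_hom K_minus Z_def Zpow[of z _ 1, simplified])
  also have "\<dots> = g"
  proof -
    have "[:- Z 0, 1:] * (\<Prod>i<n. [:- Z (Suc i), 1:]) = (\<Prod>i<Suc n. [:- Z i, 1:])"
      by (rule prod.lessThan_Suc_shift[symmetric])
    also have "\<dots> = g * [:- Z n, 1:]" by (simp only: prod.lessThan_Suc g_def)
    also have "Z n = Z 0" using n(2) by (simp add: Z_def)
    finally have "[:- Z 0, 1:] * (\<Prod>i<n. [:- Z (Suc i), 1:]) = [:- Z 0, 1:] * g" by (simp add: mult.commute)
    thus ?thesis by (subst (asm) mult_left_cancel) auto
  qed
  finally have gfix: "map_poly (\<lambda>c. c ^ q) g = g" .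
  have cf: "coeff g k \<in> range to_ac" for k
  proof -
    have "coeff g k ^ q = coeff g k"
      using arg_cong[OF gfix, of "\<lambda>p. coeff p k"] q_ge2 by (simp add: coeff_map_poly)
    thus ?thesis by (rule fixed_in_F)
  qed
  define g0 where "g0 = map_poly of_ac g"
  have acg0: "ac g0 = g"
    by (rule poly_eqI) (simp add: g0_def coeff_map_poly to_ac_of_ac[OF cf])
  have "poly g z = 0" unfolding g_def using n(1)
    by (simp add: poly_prod Z_def) (rule bexI[of _ 0], auto)
  hence fd: "f dvd g0" using irr root by (intro irr_common_root_dvd[of f z]) (simp_all add: acg0)
  have g00: "g0 \<noteq> 0" using acg0 g0 by auto
  have "degree f \<le> degree g0" using dvd_imp_degree_le[OF fd g00] .
  hence df: "degree f = n" using ge acg0 dg by (metis degree_ac le_antisym)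
  obtain r where r: "g0 = f * r" using fd by (elim dvdE)
  have r0: "r \<noteq> 0" using r g00 by auto
  have "degree r = 0" using r df dg acg0 f0 r0 by (metis add_cancel_right_right degree_ac degree_mult_eq)
  then obtain c where c: "r = [:c:]" by (elim degree_eq_zeroE)
  have "lead_coeff g0 = 1" using lg acg0 by (metis lead_coeff_ac to_ac_1 to_ac_eq_iff)
  moreover have c0: "c \<noteq> 0" using r0 c by simp
  ultimately have lc: "lead_coeff f * c = 1" using r c by (simp add: mult.commute)
  have "g = smult (to_ac c) (ac f)" using acg0 r c by (simp add: ac_mult ac_const map_poly_smult)
  hence "smult (to_ac (lead_coeff f)) g = smult (to_ac (lead_coeff f * c)) (ac f)" by simp
  hence "ac f = smult (to_ac (lead_coeff f)) g" using lc by simp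
  thus ?thesis using df unfolding g_def Z_def by simp
qed


lemma K_poly_two: "(2::'a alg_closure poly) = 0"
proof -
  have "CHAR('a alg_closure poly) = 2" using charK by simp
  hence "of_nat 2 = (0::'a alg_closure poly)" by (metis of_nat_CHAR)
  thus ?thesis by simp
qed

lemma shape_K:
  fixes a b c :: "'a alg_closure"
  defines "s \<equiv> a^2+a*b+b^2" and "t \<equiv> a^2*b+a*b^2" and "d \<equiv> c^4 + (a^2+a*b+b^2)*c^2 + (a^2*b+a*b^2)*c"
  shows "[:a,1:]*[:b,1:]*[:c,1:]*[:a+b,1:]*[:b+c,1:]*[:a+b+c,1:]*[:a+c,1:] =
    monom 1 7 + monom (s^2+d) 3 + monom (t^2+s*d) 1 + [:t*d:]"
proof -
  define Xp where "Xp = ([:0,1:] :: 'a alg_closure poly)"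
  have lin: "[:u,1:] = Xp + [:u:]" for u unfolding Xp_def by simp
  have mon: "monom u n = [:u:] * Xp^n" for u n unfolding Xp_def by (simp add: monom_altdef)
  have "[:a,1:]*[:b,1:]*[:c,1:]*[:a+b,1:]*[:b+c,1:]*[:a+b+c,1:]*[:a+c,1:] =
     Xp^7 + [:s^2+d:] * Xp^3 + [:t^2+s*d:] * Xp + [:t*d:]"
    unfolding lin s_def t_def d_def pc_add pc_mult pc_pow
    using shape_ring[of Xp "[:a:]" "[:b:]" "[:c:]"] K_poly_two by simp
  also have "\<dots> = monom 1 7 + monom (s^2+d) 3 + monom (t^2+s*d) 1 + [:t*d:]"
    by (simp add: mon Xp_def)
  finally show ?thesis .
qed

end


context fq
begin

lemma K_eq_add: "((x::'a alg_closure) = y + w) \<longleftrightarrow> (x + w = y)"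
  by (metis K_diff add_diff_cancel_right')

lemma poly_P0: "poly (ac (P0 q :: 'a poly)) z = z^(q^3) + z^(q^1) + z"
  by (simp add: P0_def ac_add ac_monom poly_monom)

lemma poly_P1: "poly (ac (P1 q :: 'a poly)) z = z^(q^3) + z^(q^2) + z"
  by (simp add: P1_def ac_add ac_monom poly_monom)

lemma Zlin:
  assumes "(z::'a alg_closure)^(q^a) = z^(q^b) + z^(q^c)"
  shows "z^(q^(a+i)) = z^(q^(b+i)) + z^(q^(c+i))"
proof -
  have "(z^(q^a))^(q^i) = (z^(q^b) + z^(q^c))^(q^i)" using assms by simp
  thus ?thesis by (simp add: frK_add Zpow)
qed

lemma V_period:
  assumes L: "(z::'a alg_closure)^(q^3) = z^(q^1) + z^(q^0)"
  shows "z^(q^7) = z"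
proof -
  define Z where "Z i = z^(q^i)" for i
  have r: "Z (i+3) = Z (i+1) + Z i" for i using Zlin[OF L, of i] by (simp add: Z_def add.commute)
  have e3: "Z 3 = Z 1 + Z 0" using r[of 0] by (simp add: eval_nat_numeral)
  have e4: "Z 4 = Z 2 + Z 1" using r[of 1] by (simp add: eval_nat_numeral)
  have e5: "Z 5 = Z 3 + Z 2" using r[of 2] by (simp add: eval_nat_numeral)
  have e7: "Z 7 = Z 5 + Z 4" using r[of 4] by (simp add: eval_nat_numeral)
  have "Z 7 = Z 0 + (Z 1 + Z 1) + (Z 2 + Z 2)" by (simp add: e7 e5 e4 e3 algebra_simps)
  also have "\<dots> = Z 0" by (simp add: K_add_self)
  finally show ?thesis by (simp add: Z_def)
qed

lemma W_period:
  assumes L: "(z::'a alg_closure)^(q^3) = z^(q^2) + z^(q^0)"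
  shows "z^(q^7) = z"
proof -
  define Z where "Z i = z^(q^i)" for i
  have r: "Z (i+3) = Z (i+2) + Z i" for i using Zlin[OF L, of i] by (simp add: Z_def add.commute)
  have e3: "Z 3 = Z 2 + Z 0" using r[of 0] by (simp add: eval_nat_numeral)
  have e4: "Z 4 = Z 3 + Z 1" using r[of 1] by (simp add: eval_nat_numeral)
  have e5: "Z 5 = Z 4 + Z 2" using r[of 2] by (simp add: eval_nat_numeral)
  have e6: "Z 6 = Z 5 + Z 3" using r[of 3] by (simp add: eval_nat_numeral)
  have e7: "Z 7 = Z 6 + Z 4" using r[of 4] by (simp add: eval_nat_numeral)
  have "Z 7 = Z 0 + (Z 0 + Z 0) + (Z 1 + Z 1) + (Z 2 + Z 2) + (Z 2 + Z 2)" by (simp add: e7 e6 e5 e4 e3 algebra_simps)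
  also have "\<dots> = Z 0" by (simp add: K_add_self)
  finally show ?thesis by (simp add: Z_def)
qed

lemma least7:
  assumes p7: "(z::'a alg_closure)^(q^7) = z" and nf: "z^(q^1) \<noteq> z"
  shows "\<forall>i. 0 < i \<and> i < 7 \<longrightarrow> z^(q^i) \<noteq> z"
proof (intro allI impI notI)
  fix i assume i: "0 < i \<and> i < 7" and zi: "z^(q^i) = z"
  have A: "z^(q^(k*i)) = z" for k using Zperiod[OF zi, of k 0] by simp
  have B: "z^(q^(t*7+1)) = z^(q^1)" for t using Zperiod[OF p7, of t 1] .
  have "\<exists>k t. k * i = t * 7 + 1"
  proof -
    from i have "i = 1 \<or> i = 2 \<or> i = 3 \<or> i = 4 \<or> i = 5 \<or> i = 6" by auto
    thus ?thesis
    proof (elim disjE)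
      assume "i = 1" thus ?thesis by (intro exI[of _ 1] exI[of _ 0]) simp
    next
      assume "i = 2" thus ?thesis by (intro exI[of _ 4] exI[of _ 1]) simp
    next
      assume "i = 3" thus ?thesis by (intro exI[of _ 5] exI[of _ 2]) simp
    next
      assume "i = 4" thus ?thesis by (intro exI[of _ 2] exI[of _ 1]) simp
    next
      assume "i = 5" thus ?thesis by (intro exI[of _ 3] exI[of _ 2]) simp
    next
      assume "i = 6" thus ?thesis by (intro exI[of _ 6] exI[of _ 5]) simp
    qed
  qed
  then obtain k t where "k * i = t * 7 + 1" by blast
  hence "z^(q^1) = z" using A[of k] B[of t] by simp
  thus False using nf by simp
qed

lemma VW_not_fixed:
  assumes "(z::'a alg_closure) \<noteq> 0" "z^(q^3) = z^(q^1) + z^(q^0) \<or> z^(q^3) = z^(q^2) + z^(q^0)"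
  shows "z^(q^1) \<noteq> z"
proof
  assume "z^(q^1) = z"
  hence "z^(q^(k*1+0)) = z" for k using Zperiod[of z 1 k 0] by simp
  hence "z^(q^3) = z" "z^(q^2) = z" "z^(q^1) = z" using \<open>z^(q^1) = z\<close> by (metis mult_1_right add_0_right)+
  hence "z = z + z" using assms(2) by auto
  hence "z = 0" by (simp add: K_add_self)
  thus False using assms(1) by simp
qed


lemma shape_coeffs:
  fixes f :: "'a poly"
  assumes "ac f = monom 1 7 + monom A 3 + monom B 1 + [:C:]"
  shows "f = monom 1 7 + monom (coeff f 3) 3 + monom (coeff f 1) 1 + [:coeff f 0:]"
proof -
  have cA: "to_ac (coeff f 3) = A" using arg_cong[OF assms, of "\<lambda>p. coeff p 3"]
    by (simp add: coeff_ac coeff_monom coeff_pCons)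
  have "coeff (ac f) 1 = coeff (monom 1 7 + monom A 3 + monom B 1 + [:C:]) 1" by (simp only: assms)
  also have "\<dots> = B" by (simp add: coeff_monom coeff_pCons)
  finally have "coeff (ac f) 1 = B" .
  hence cB: "to_ac (coeff f 1) = B" by (simp only: coeff_ac)
  have cC: "to_ac (coeff f 0) = C" using arg_cong[OF assms, of "\<lambda>p. coeff p 0"]
    by (simp add: coeff_ac coeff_monom coeff_pCons)
  have "ac (monom 1 7 + monom (coeff f 3) 3 + monom (coeff f 1) 1 + [:coeff f 0:]) = ac f"
    by (simp only: ac_add ac_monom ac_const cA cB cC assms to_ac_1)
  thus ?thesis by (metis ac_inj)
qed

lemma VW_factor_in_S:
  fixes f :: "'a poly"
  assumes irr: "irreducible f" and lc: "lead_coeff f = 1" and root: "poly (ac f) z = 0" and z0: "z \<noteq> 0"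
  and VW: "z^(q^3) = z^(q^1) + z^(q^0) \<or> z^(q^3) = z^(q^2) + z^(q^0)"
  shows "f \<in> S_set"
proof -
  have p7: "z^(q^7) = z" using VW V_period W_period by blast
  have nf: "z^(q^1) \<noteq> z" using VW_not_fixed[OF z0 VW] .
  have l7: "\<forall>i. 0 < i \<and> i < 7 \<longrightarrow> z^(q^i) \<noteq> z" using least7[OF p7 nf] .
  have o: "degree f = 7 \<and> ac f = smult (to_ac (lead_coeff f)) (\<Prod>i<7. [:- (z ^ (q ^ i)), 1:])"
    using orbit[OF irr root _ p7 l7] by simp
  define Z where "Z i = z^(q^i)" for i
  have acf: "ac f = (\<Prod>i<7. [:- Z i, 1:])" using o lc by (simp add: Z_def)
  have pe: "(\<Prod>i<7. [:- Z i, 1:]) = [:Z 0,1:]*[:Z 1,1:]*[:Z 2,1:]*[:Z 3,1:]*[:Z 4,1:]*[:Z 5,1:]*[:Z 6,1:]"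
    by (simp add: eval_nat_numeral K_minus mult_ac)
  have "\<exists>A B C. ac f = monom 1 7 + monom A 3 + monom B 1 + [:C:]"
    using VW
  proof
    assume L: "z^(q^3) = z^(q^1) + z^(q^0)"
    have r: "Z (i+3) = Z (i+1) + Z i" for i using Zlin[OF L, of i] by (simp add: Z_def add.commute)
    have e3: "Z 3 = Z 0 + Z 1" using r[of 0] by (simp add: eval_nat_numeral add.commute)
    have e4: "Z 4 = Z 1 + Z 2" using r[of 1] by (simp add: eval_nat_numeral add.commute)
    have e5: "Z 5 = Z 0 + Z 1 + Z 2" using r[of 2] e3 by (simp add: eval_nat_numeral add_ac)
    have e6: "Z 6 = Z 0 + Z 2 + (Z 1 + Z 1)" using r[of 3] e3 e4 by (simp add: eval_nat_numeral add_ac)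
    hence e6': "Z 6 = Z 0 + Z 2" by (simp add: K_add_self)
    have "ac f = [:Z 0,1:]*[:Z 1,1:]*[:Z 2,1:]*[:Z 0 + Z 1,1:]*[:Z 1 + Z 2,1:]*[:Z 0 + Z 1 + Z 2,1:]*[:Z 0 + Z 2,1:]"
      by (simp only: acf pe e3 e4 e5 e6')
    thus ?thesis using shape_K by metis
  next
    assume L: "z^(q^3) = z^(q^2) + z^(q^0)"
    have r: "Z (i+3) = Z (i+2) + Z i" for i using Zlin[OF L, of i] by (simp add: Z_def add.commute)
    have e3: "Z 3 = Z 0 + Z 2" using r[of 0] by (simp add: eval_nat_numeral add.commute)
    have e4: "Z 4 = Z 0 + Z 1 + Z 2" using r[of 1] e3 by (simp add: eval_nat_numeral add_ac)
    have e5: "Z 5 = Z 0 + Z 1 + (Z 2 + Z 2)" using r[of 2] e4 by (simp add: eval_nat_numeral add_ac)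
    hence e5': "Z 5 = Z 0 + Z 1" by (simp add: K_add_self)
    have e6: "Z 6 = Z 1 + Z 2 + (Z 0 + Z 0)" using r[of 3] e5' e3 by (simp add: eval_nat_numeral add_ac)
    hence e6': "Z 6 = Z 1 + Z 2" by (simp add: K_add_self)
    have "ac f = [:Z 0,1:]*[:Z 1,1:]*[:Z 2,1:]*[:Z 0 + Z 1,1:]*[:Z 1 + Z 2,1:]*[:Z 0 + Z 1 + Z 2,1:]*[:Z 0 + Z 2,1:]"
      by (simp only: acf pe e3 e4 e5' e6' mult_ac)
    thus ?thesis using shape_K by metis
  qed
  then obtain A B C where "ac f = monom 1 7 + monom A 3 + monom B 1 + [:C:]" by blast
  hence "f = monom 1 7 + monom (coeff f 3) 3 + monom (coeff f 1) 1 + [:coeff f 0:]" by (rule shape_coeffs)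
  thus ?thesis unfolding S_set_def using irr by blast
qed


lemma K_add_self2: "(x::'a alg_closure) + (x + y) = y"
  by (simp add: add.assoc[symmetric] K_add_self)

lemma K_eq_iff: "((x::'a alg_closure) = y) \<longleftrightarrow> (x + y = 0)"
  by (metis K_add_self K_eq_add add_0)

lemma S_form:
  assumes "f \<in> S_set"
  obtains a b c where "f = monom 1 7 + monom a 3 + monom b 1 + [:c:]" "irreducible f"
  using assms unfolding S_set_def by blast

lemma S_degree:
  fixes a b c :: 'a
  shows "degree (monom 1 7 + monom a 3 + monom b 1 + [:c:]) = 7"
    and "lead_coeff (monom 1 7 + monom a 3 + monom b 1 + [:c:]) = 1"
proof -
  have d3: "degree (monom a 3 + monom b 1 + [:c:]) < 7"
    by (intro degree_add_less degree_monom_le[THEN le_less_trans]) auto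
  have "degree (monom 1 7 + (monom a 3 + monom b 1 + [:c:])) = 7"
    using d3 by (subst degree_add_eq_left) (auto simp: degree_monom_eq)
  thus "degree (monom 1 7 + monom a 3 + monom b 1 + [:c:]) = 7" by (simp add: add.assoc)
  thus "lead_coeff (monom 1 7 + monom a 3 + monom b 1 + [:c:]) = 1"
    by (simp add: coeff_monom coeff_pCons)
qed

lemma S_root:
  fixes f :: "'a poly"
  assumes S: "f \<in> S_set" and root: "poly (ac f) z = 0"
  shows "z \<noteq> 0" "z^(q^3) = z^(q^1) + z^(q^0) \<or> z^(q^3) = z^(q^2) + z^(q^0)"
    "ac f = (\<Prod>i<7. [:- (z^(q^i)), 1:])" "inj_on (\<lambda>i. z^(q^i)) {..<7}"
    "{x. poly (ac f) x = 0} = (\<lambda>i. z^(q^i)) ` {..<7}"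
proof -
  obtain a b c where fe: "f = monom 1 7 + monom a 3 + monom b 1 + [:c:]" and irr: "irreducible f"
    using S by (rule S_form)
  have df: "degree f = 7" and lf: "lead_coeff f = 1" using S_degree fe by auto
  have f0: "f \<noteq> 0" using irr by auto
  define Z where "Z i = z^(q^i)" for i
  have "\<exists>n. 0 < n \<and> Z n = z"
  proof (rule ccontr)
    assume np: "\<not> (\<exists>n. 0 < n \<and> Z n = z)"
    have "inj_on Z {..7}"
    proof (rule inj_onI)
      fix i j assume ij: "i \<in> {..7}" "j \<in> {..7}" "Z i = Z j"
      show "i = j"
      proof (rule ccontr)
        assume "i \<noteq> j"
        then consider "i < j" | "j < i" by linarith
        thus False
        proof cases
          case 1
          have "(z ^ (q ^ (j - i))) ^ (q ^ i) = z ^ (q ^ i)" using ij(3) 1 by (simp add: Zpow Z_def)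
          hence "Z (j - i) = z" unfolding Z_def by (rule frK_inj)
          moreover have "0 < j - i" using 1 by simp
          ultimately show False using np by blast
        next
          case 2
          have "(z ^ (q ^ (i - j))) ^ (q ^ j) = z ^ (q ^ j)" using ij(3) 2 by (simp add: Zpow Z_def)
          hence "Z (i - j) = z" unfolding Z_def by (rule frK_inj)
          moreover have "0 < i - j" using 2 by simp
          ultimately show False using np by blast
        qed
      qed
    qed
    hence "card (Z ` {..7}) = 8" by (simp add: card_image)
    moreover have "Z ` {..7} \<subseteq> {x. poly (ac f) x = 0}" using root_orbit[OF root] by (auto simp: Z_def)
    hence "card (Z ` {..7}) \<le> card {x. poly (ac f) x = 0}"
      using f0 by (intro card_mono poly_roots_finite) auto
    moreover have "card {x. poly (ac f) x = 0} \<le> 7" using card_poly_roots_bound[of "ac f"] f0 df by simp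
    ultimately show False by simp
  qed
  define n0 where "n0 = (LEAST n. 0 < n \<and> Z n = z)"
  have n0: "0 < n0" "Z n0 = z" using LeastI_ex[OF \<open>\<exists>n. 0 < n \<and> Z n = z\<close>] unfolding n0_def by auto
  have n0l: "\<forall>i. 0 < i \<and> i < n0 \<longrightarrow> z ^ (q ^ i) \<noteq> z"
    using not_less_Least unfolding n0_def Z_def by blast
  have o: "degree f = n0 \<and> ac f = smult (to_ac (lead_coeff f)) (\<Prod>i<n0. [:- (z ^ (q ^ i)), 1:])"
    using orbit[OF irr root n0(1) _ n0l] n0(2) by (simp add: Z_def)
  hence n07: "n0 = 7" using df by simp
  show acf: "ac f = (\<Prod>i<7. [:- (z^(q^i)), 1:])" using o n07 lf by simp
  have l7: "\<forall>i. 0 < i \<and> i < 7 \<longrightarrow> Z i \<noteq> z" using n0l n07 by (simp add: Z_def)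
  have p7: "Z 7 = z" using n0 n07 by simp
  show inj: "inj_on (\<lambda>i. z^(q^i)) {..<7}" using Zdistinct l7 by (simp add: Z_def)
  hence injZ: "inj_on Z {..<7}" by (simp add: Z_def[abs_def])
  have Z0: "Z 0 = z" by (simp add: Z_def)
  have Zp: "Z (7 + j) = Z j" for j using Zperiod[of z 7 1 j] p7 by (simp add: Z_def)
  show z0: "z \<noteq> 0"
  proof
    assume "z = 0"
    hence "Z 1 = z" using q_ge2 by (simp add: Z_def)
    thus False using l7 by auto
  qed
  show R: "{x. poly (ac f) x = 0} = (\<lambda>i. z^(q^i)) ` {..<7}"
    unfolding acf by (auto simp: poly_prod)
  \<comment> \<open>additivity of the roots\<close>
  have pf: "poly (ac f) y = y^7 + to_ac a * y^3 + to_ac b * y + to_ac c" for y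
    by (simp add: fe ac_add ac_monom ac_const poly_monom)
  define AA where "AA y = y * poly (ac f) y" for y
  have AA: "AA y = y^(2^3) + to_ac a * y^(2^2) + to_ac b * y^(2^1) + to_ac c * y" for y
    by (simp add: AA_def pf algebra_simps eval_nat_numeral)
  have AAadd: "AA (u + v) = AA u + AA v" for u v
  proof -
    have e: "(u+v)^(2^k) = u^(2^k) + v^(2^k)" for k by (rule fr_add[OF charK])
    show ?thesis by (simp only: AA e) (simp add: algebra_simps)
  qed
  have Z1r: "poly (ac f) (Z 1) = 0" unfolding Z_def by (rule root_orbit[OF root])
  have "AA (Z 0 + Z 1) = 0" using AAadd root Z1r Z0 by (simp add: AA_def)
  moreover have s0: "Z 0 + Z 1 \<noteq> 0"
  proof
    assume "Z 0 + Z 1 = 0"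
    hence "Z 1 = z" using K_eq_iff Z0 by (metis add.commute)
    thus False using l7 by auto
  qed
  ultimately have "poly (ac f) (Z 0 + Z 1) = 0" by (simp add: AA_def)
  hence "Z 0 + Z 1 \<in> Z ` {..<7}" using R by (auto simp: Z_def[abs_def])
  then obtain k where k: "k < 7" "Z k = Z 0 + Z 1" by auto
  have shift: "Z (k + i) = Z i + Z (1 + i)" for i
    using Zlin[of z k 0 1 i] k(2) by (simp add: Z_def)
  have neq: "Z i \<noteq> Z j" if "i < 7" "j < 7" "i \<noteq> j" for i j
    using injZ that by (auto dest: inj_onD)
  have z1: "Z 1 \<noteq> 0"
  proof
    assume "Z 1 = 0" hence "z = 0" using q_ge2 by (simp add: Z_def)
    thus False using z0 by simp
  qed
  have "k = 3 \<or> k = 5"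
  proof -
    have "k \<noteq> 0"
    proof
      assume "k = 0" hence eq: "Z 0 = Z 0 + Z 1" using k(2) by simp
      have "Z 0 + Z 0 = Z 0 + (Z 0 + Z 1)" using arg_cong[OF eq, of "\<lambda>x. Z 0 + x"] .
      hence "Z 1 = 0" by (simp only: K_add_self K_add_self2)
      thus False using z1 by simp
    qed
    moreover have "k \<noteq> 1"
    proof
      assume "k = 1" hence eq: "Z 1 = Z 0 + Z 1" using k(2) by simp
      have "Z 1 + Z 1 = Z 0 + Z 1 + Z 1" using arg_cong[OF eq, of "\<lambda>x. x + Z 1"] .
      hence "Z 0 = 0" by (simp only: K_add_self add.assoc add_0_right)
      thus False using z0 Z0 by simp
    qed
    moreover have "k \<noteq> 2"
    proof
      assume "k = 2"
      hence "Z 3 = Z 1 + Z 2" using shift[of 1] by (simp add: eval_nat_numeral)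
      also have "\<dots> = Z 1 + (Z 0 + Z 1)" using k(2) \<open>k = 2\<close> by simp
      also have "\<dots> = Z 0" by (simp only: add.left_commute[of "Z 1" "Z 0"] K_add_self add_0_right)
      finally show False using neq[of 3 0] by simp
    qed
    moreover have "k \<noteq> 4"
    proof
      assume "k = 4"
      hence "Z 7 = Z 3 + Z 4" using shift[of 3] by (simp add: eval_nat_numeral)
      hence "Z 0 = Z 3 + (Z 0 + Z 1)" using k(2) \<open>k = 4\<close> Zp[of 0] by simp
      hence "Z 0 + (Z 3 + (Z 0 + Z 1)) = 0" using K_eq_iff by blast
      hence "Z 3 + Z 1 = 0" by (simp add: add_ac K_add_self2)
      hence "Z 3 = Z 1" using K_eq_iff by blast
      thus False using neq[of 3 1] by simp
    qed
    moreover have "k \<noteq> 6"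
    proof
      assume "k = 6"
      hence "Z 7 = Z 1 + Z 2" using shift[of 1] by (simp add: eval_nat_numeral)
      hence "Z 0 = Z 1 + Z 2" using Zp[of 0] by simp
      hence "Z 0 + (Z 1 + Z 2) = 0" using K_eq_iff by blast
      hence "Z 2 + (Z 0 + Z 1) = 0" by (simp add: add_ac)
      hence "Z 2 = Z 0 + Z 1" using K_eq_iff by blast
      hence "Z 2 = Z 6" using k(2) \<open>k = 6\<close> by simp
      thus False using neq[of 2 6] by simp
    qed
    ultimately show ?thesis using k(1) by auto
  qed
  thus "z^(q^3) = z^(q^1) + z^(q^0) \<or> z^(q^3) = z^(q^2) + z^(q^0)"
  proof
    assume "k = 3"
    hence "Z 3 = Z 1 + Z 0" using k(2) by (simp add: add.commute)
    thus ?thesis by (simp add: Z_def)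
  next
    assume "k = 5"
    hence "Z 7 = Z 2 + Z 3" using shift[of 2] by (simp add: eval_nat_numeral)
    hence "Z 0 = Z 2 + Z 3" using Zp[of 0] by simp
    hence "Z 0 + (Z 2 + Z 3) = 0" using K_eq_iff by blast
    hence "Z 3 + (Z 2 + Z 0) = 0" by (simp add: add_ac)
    hence "Z 3 = Z 2 + Z 0" using K_eq_iff by blast
    thus ?thesis by (simp add: Z_def)
  qed
qed

end

lemma split_sep:
  fixes p :: "'b::alg_closed_field poly"
  assumes lc: "lead_coeff p = 1" and sep: "\<And>z. poly p z = 0 \<Longrightarrow> poly (pderiv p) z \<noteq> 0"
  shows "p = (\<Prod>z\<in>{z. poly p z = 0}. [:-z,1:])" "card {z. poly p z = 0} = degree p"
proof -
  have p0: "p \<noteq> 0" using lc by auto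
  obtain A where A: "size A = degree p" "p = smult (lead_coeff p) (\<Prod>x\<in>#A. [:-x, 1:])"
    using alg_closed_imp_factorization[OF p0] by blast
  have pA: "p = (\<Prod>x\<in>#A. [:-x, 1:])" using A(2) lc by simp
  have roots: "{z. poly p z = 0} = set_mset A"
  proof -
    have "poly p z = 0 \<longleftrightarrow> z \<in># A" for z
      by (subst pA) (auto simp: poly_prod_mset)
    thus ?thesis by auto
  qed
  have c1: "count A x \<le> 1" for x
  proof (rule ccontr)
    assume "\<not> count A x \<le> 1"
    hence "0 < count A x" by linarith
    hence "x \<in># A" by simp
    from multi_member_split[OF this] obtain A' where A': "A = add_mset x A'" by (elim exE)
    have "count A' x \<ge> 1" using \<open>\<not> count A x \<le> 1\<close> A' by simp
    hence "x \<in># A'" by simp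
    from multi_member_split[OF this] obtain B where B: "A' = add_mset x B" by (elim exE)
    define l where "l = [:-x, 1:]"
    define r where "r = (\<Prod>y\<in>#B. [:-y, 1:])"
    have pe: "p = l * (l * r)" using pA A' B by (simp add: l_def r_def mult.assoc)
    have lx: "poly l x = 0" by (simp add: l_def)
    have "poly p x = 0" using pe lx by simp
    moreover have "poly (pderiv p) x = 0"
      unfolding pe pderiv_mult using lx by simp
    ultimately show False using sep by blast
  qed
  have Aset: "A = mset_set (set_mset A)"
  proof (rule multiset_eqI)
    fix x show "count A x = count (mset_set (set_mset A)) x"
    proof (cases "x \<in># A")
      case True
      hence "0 < count A x" by simp
      hence "count A x = 1" using c1[of x] by linarith
      thus ?thesis using True by (simp add: count_mset_set')
    next
      case False
      hence "count A x = 0" by (simp add: count_eq_zero_iff)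
      thus ?thesis using False by (simp add: count_mset_set')
    qed
  qed
  have "p = (\<Prod>x\<in>#mset_set (set_mset A). [:-x, 1:])" using pA Aset by simp
  also have "\<dots> = (\<Prod>z\<in>set_mset A. [:-z,1:])" by (simp add: prod_unfold_prod_mset)
  finally show "p = (\<Prod>z\<in>{z. poly p z = 0}. [:-z,1:])" using roots by simp
  have "size A = card (set_mset A)" by (subst Aset) simp
  thus "card {z. poly p z = 0} = degree p" using roots A(1) by simp
qed

context fq
begin

lemma deg_P:
  "degree (P0 q :: 'a poly) = q^3" "lead_coeff (P0 q :: 'a poly) = 1"
  "degree (P1 q :: 'a poly) = q^3" "lead_coeff (P1 q :: 'a poly) = 1"
proof -
  have q1': "1 < q" using q_ge2 by simp
  have "q * 1 < q * q" using q1' by (intro mult_strict_left_mono) auto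
  hence a: "q < q^2" by (simp add: power2_eq_square)
  have "q^2 * 1 < q^2 * q" using q1' by (intro mult_strict_left_mono) auto
  hence b: "q^2 < q^3" by (simp add: power2_eq_square power3_eq_cube)
  have q1: "q < q^2" "q^2 < q^3" "1 < q" using a b q1' by auto
  hence q3: "q < q^3" by linarith
  have d1: "degree (monom (1::'a) q + monom 1 1) = q" using q1
    by (subst degree_add_eq_left) (auto simp: degree_monom_eq)
  have "degree (monom (1::'a) (q^3) + (monom 1 q + monom 1 1)) = q^3" using q3 d1
    by (subst degree_add_eq_left) (auto simp: degree_monom_eq)
  thus dP0: "degree (P0 q :: 'a poly) = q^3" by (simp add: P0_def add.assoc)
  thus "lead_coeff (P0 q :: 'a poly) = 1" unfolding P0_def using q1 q3
    by (simp add: coeff_monom)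
  have d2: "degree (monom (1::'a) (q^2) + monom 1 1) = q^2" using q1
    by (subst degree_add_eq_left) (auto simp: degree_monom_eq)
  have "degree (monom (1::'a) (q^3) + (monom 1 (q^2) + monom 1 1)) = q^3" using q1 d2
    by (subst degree_add_eq_left) (auto simp: degree_monom_eq)
  thus dP1: "degree (P1 q :: 'a poly) = q^3" by (simp add: P1_def add.assoc)
  thus "lead_coeff (P1 q :: 'a poly) = 1" unfolding P1_def using q1 q3
    by (simp add: coeff_monom)
qed

lemma of_nat_q_pow: "k > 0 \<Longrightarrow> (of_nat (q^k) :: 'a alg_closure) = 0"
proof -
  assume k: "k > 0"
  have "2 dvd q^k" using m_pos k card by (simp add: q_pow)
  thus ?thesis using charK by (simp add: of_nat_eq_0_iff_char_dvd)
qed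

lemma pderiv_P:
  "pderiv (ac (P0 q :: 'a poly)) = 1" "pderiv (ac (P1 q :: 'a poly)) = 1"
  by (simp_all add: P0_def P1_def ac_add ac_monom pderiv_add pderiv_monom of_nat_q_pow
      of_nat_q_pow[of 1, simplified])

lemma split_P:
  "ac (P0 q :: 'a poly) = (\<Prod>z\<in>{z. poly (ac (P0 q :: 'a poly)) z = 0}. [:-z,1:])"
  "card {z. poly (ac (P0 q :: 'a poly)) z = 0} = q^3"
  "ac (P1 q :: 'a poly) = (\<Prod>z\<in>{z. poly (ac (P1 q :: 'a poly)) z = 0}. [:-z,1:])"
  "card {z. poly (ac (P1 q :: 'a poly)) z = 0} = q^3"
proof -
  have l0: "lead_coeff (ac (P0 q :: 'a poly)) = 1" by (metis lead_coeff_ac deg_P(2) to_ac_1)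
  have l1: "lead_coeff (ac (P1 q :: 'a poly)) = 1" by (metis lead_coeff_ac deg_P(4) to_ac_1)
  have s0: "poly (pderiv (ac (P0 q :: 'a poly))) z \<noteq> 0" for z by (simp add: pderiv_P)
  have s1: "poly (pderiv (ac (P1 q :: 'a poly))) z \<noteq> 0" for z by (simp add: pderiv_P)
  show "ac (P0 q :: 'a poly) = (\<Prod>z\<in>{z. poly (ac (P0 q :: 'a poly)) z = 0}. [:-z,1:])"
    using split_sep(1)[OF l0 s0] .
  show "card {z. poly (ac (P0 q :: 'a poly)) z = 0} = q^3"
    using split_sep(2)[OF l0 s0] by (simp add: deg_P)
  show "ac (P1 q :: 'a poly) = (\<Prod>z\<in>{z. poly (ac (P1 q :: 'a poly)) z = 0}. [:-z,1:])"
    using split_sep(1)[OF l1 s1] .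
  show "card {z. poly (ac (P1 q :: 'a poly)) z = 0} = q^3"
    using split_sep(2)[OF l1 s1] by (simp add: deg_P)
qed

end


context fq
begin

lemma V_iff: "poly (ac (P0 q :: 'a poly)) z = 0 \<longleftrightarrow> z^(q^3) = z^(q^1) + z^(q^0)"
  using K_eq_iff[of "z^(q^3)" "z^(q^1) + z^(q^0)"] by (simp add: poly_P0 add.assoc)

lemma W_iff: "poly (ac (P1 q :: 'a poly)) z = 0 \<longleftrightarrow> z^(q^3) = z^(q^2) + z^(q^0)"
  using K_eq_iff[of "z^(q^3)" "z^(q^2) + z^(q^0)"] by (simp add: poly_P1 add.assoc)

lemma VW_inter:
  "{z. poly (ac (P0 q :: 'a poly)) z = 0} \<inter> {z. poly (ac (P1 q :: 'a poly)) z = 0} = {0}"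
proof
  show "{0} \<subseteq> {z. poly (ac (P0 q :: 'a poly)) z = 0} \<inter> {z. poly (ac (P1 q :: 'a poly)) z = 0}"
  proof -
    have "0 < q" using q_ge2 by simp
    thus ?thesis by (simp add: poly_P0 poly_P1 power_0_left)
  qed
next
  show "{z. poly (ac (P0 q :: 'a poly)) z = 0} \<inter> {z. poly (ac (P1 q :: 'a poly)) z = 0} \<subseteq> {0}"
  proof
    fix z assume z: "z \<in> {z. poly (ac (P0 q :: 'a poly)) z = 0} \<inter> {z. poly (ac (P1 q :: 'a poly)) z = 0}"
    hence a: "z^(q^3) = z^(q^1) + z^(q^0)" and b: "z^(q^3) = z^(q^2) + z^(q^0)"
      using V_iff W_iff by auto
    have "z^(q^1) + z^(q^0) = z^(q^2) + z^(q^0)" using a b by simp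
    hence "z^(q^1) = z^(q^2)" by simp
    moreover have "(z^(q^1))^(q^1) = z^(q^2)" using Zpow[of z 1 1] by (simp add: numeral_2_eq_2)
    ultimately have "z^(q^1) = (z^(q^1))^(q^1)" by simp
    hence "z = z^(q^1)" by (rule frK_inj)
    hence "z = 0" using VW_not_fixed[of z] a by auto
    thus "z \<in> {0}" by simp
  qed
qed

lemma finite_S: "finite (S_set :: 'a poly set)"
proof -
  have "S_set \<subseteq> (\<lambda>(a,b,c). monom 1 7 + monom a 3 + monom b 1 + [:c:]) ` (UNIV :: ('a \<times> 'a \<times> 'a) set)"
  proof
    fix f :: "'a poly" assume "f \<in> S_set"
    then obtain a b c where "f = monom 1 7 + monom a 3 + monom b 1 + [:c:]" by (rule S_form)
    thus "f \<in> (\<lambda>(a,b,c). monom 1 7 + monom a 3 + monom b 1 + [:c:]) ` (UNIV :: ('a \<times> 'a \<times> 'a) set)"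
      by (intro image_eqI[of _ _ "(a,b,c)"]) auto
  qed
  thus ?thesis by (rule finite_subset) simp
qed

lemma S_has_root:
  assumes "(f :: 'a poly) \<in> S_set"
  shows "\<exists>z. poly (ac f) z = 0"
proof -
  obtain a b c where "f = monom 1 7 + monom a 3 + monom b 1 + [:c:]" using assms by (rule S_form)
  hence "degree (ac f) = 7" using S_degree by simp
  thus ?thesis by (intro alg_closed_imp_poly_has_root) simp
qed

lemma S_R:
  assumes "(f :: 'a poly) \<in> S_set"
  shows "ac f = (\<Prod>x\<in>{x. poly (ac f) x = 0}. [:-x,1:])" "card {x. poly (ac f) x = 0} = 7"
    "finite {x. poly (ac f) x = 0}"
proof -
  obtain z where z: "poly (ac f) z = 0" using S_has_root[OF assms] by blast
  note sr = S_root[OF assms z]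
  have "ac f = (\<Prod>i<7. [:- (z^(q^i)), 1:])" by (rule sr(3))
  also have "\<dots> = (\<Prod>x\<in>(\<lambda>i. z^(q^i)) ` {..<7}. [:-x,1:])"
    by (rule prod.reindex[OF sr(4), symmetric, unfolded comp_def])
  finally show "ac f = (\<Prod>x\<in>{x. poly (ac f) x = 0}. [:-x,1:])" using sr(5) by simp
  show "card {x. poly (ac f) x = 0} = 7" using sr(5) card_image[OF sr(4)] by simp
  show "finite {x. poly (ac f) x = 0}" using sr(5) by simp
qed

lemma S_R_sub:
  assumes "(f :: 'a poly) \<in> S_set" "poly (ac f) x = 0"
  shows "x \<noteq> 0" "poly (ac (P0 q :: 'a poly)) x = 0 \<or> poly (ac (P1 q :: 'a poly)) x = 0"
  using S_root(1,2)[OF assms] V_iff W_iff by auto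

lemma S_irr: "(f :: 'a poly) \<in> S_set \<Longrightarrow> irreducible f"
  unfolding S_set_def by blast

lemma S_lc: "(f :: 'a poly) \<in> S_set \<Longrightarrow> lead_coeff f = 1 \<and> degree f = 7"
  by (metis S_form S_degree)

lemma dvd_roots:
  assumes "(f :: 'a poly) dvd g" "poly (ac f) x = 0"
  shows "poly (ac g) x = 0"
  using ac_dvd[OF assms(1)] assms(2) by (metis dvd_def mult_eq_0_iff poly_mult)

lemma cover:
  assumes "z \<noteq> 0" "poly (ac (P0 q :: 'a poly)) z = 0 \<or> poly (ac (P1 q :: 'a poly)) z = 0"
  shows "\<exists>f\<in>S_set. poly (ac f) z = 0"
proof -
  have ne: "(P0 q :: 'a poly) \<noteq> 0" "(P1 q :: 'a poly) \<noteq> 0" using deg_P by auto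
  obtain g :: "'a poly" where g: "g \<noteq> 0" "poly (ac g) z = 0" using assms(2) ne by blast
  obtain h where h: "irreducible h" "lead_coeff h = 1" "poly (ac h) z = 0"
    using minpoly_exists[OF g] by blast
  have "h \<in> S_set"
    by (rule VW_factor_in_S[OF h assms(1)]) (use assms(2) V_iff W_iff in blast)
  thus ?thesis using h(3) by blast
qed

lemma S_disj:
  assumes "f \<in> S_set" "g \<in> S_set" "poly (ac (f :: 'a poly)) z = 0" "poly (ac g) z = 0"
  shows "f = g"
proof -
  have "f dvd g" using irr_common_root_dvd[OF S_irr[OF assms(1)] assms(3,4)] .
  then obtain k where k: "g = f * k" by (elim dvdE)
  have lf0: "lead_coeff f = 1 \<and> degree f = 7" using S_lc[OF assms(1)] .
  have lg0: "lead_coeff g = 1 \<and> degree g = 7" using S_lc[OF assms(2)] .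
  have lf: "lead_coeff f = 1" "degree f = 7" using lf0 by (metis, metis)
  have lg: "lead_coeff g = 1" "degree g = 7" using lg0 by (metis, metis)
  have f0: "f \<noteq> 0" using lf by auto
  have k0: "k \<noteq> 0" using k lg by auto
  have "degree k = 0" using k lf lg f0 k0 by (simp add: degree_mult_eq)
  then obtain c where c: "k = [:c:]" by (elim degree_eq_zeroE)
  have cf: "coeff f 7 = 1" using lf(1) unfolding lf(2) .
  have cg: "coeff g 7 = 1" using lg(1) unfolding lg(2) .
  have "coeff g 7 = c" using k c cf by simp
  hence "c = 1" using cg by simp
  thus ?thesis using k c by simp
qed

theorem main:
  "(P0 q :: 'a poly) * P1 q = monom 1 2 * (\<Prod>f\<in>S_set. f)
   \<and> card {f \<in> (S_set :: 'a poly set). f dvd P0 q} = (q^3 - 1) div 7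
   \<and> card {f \<in> (S_set :: 'a poly set). f dvd P1 q} = (q^3 - 1) div 7"
proof -
  define V where "V = {z. poly (ac (P0 q :: 'a poly)) z = 0}"
  define W where "W = {z. poly (ac (P1 q :: 'a poly)) z = 0}"
  define R where "R f = {x. poly (ac (f :: 'a poly)) x = 0}" for f
  define lin where "lin x = ([:-x,1:] :: 'a alg_closure poly)" for x
  have fV: "finite V" and fW: "finite W"
    using split_P card_ge_0_finite q_ge2 unfolding V_def W_def by (metis zero_less_power less_le_trans zero_less_numeral)+
  have V0: "0 \<in> V" and W0: "0 \<in> W" using VW_inter unfolding V_def W_def by auto
  have VW: "V \<inter> W = {0}" using VW_inter unfolding V_def W_def by simp
  have fS: "finite (S_set :: 'a poly set)" by (rule finite_S)
  have fR: "finite (R f)" if "f \<in> S_set" for f using S_R(3)[OF that] unfolding R_def .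
  have cR: "card (R f) = 7" if "f \<in> S_set" for f using S_R(2)[OF that] unfolding R_def .
  have acR: "ac f = (\<Prod>x\<in>R f. lin x)" if "f \<in> S_set" for f using S_R(1)[OF that] unfolding R_def lin_def .
  have disj: "R f \<inter> R g = {}" if "f \<in> S_set" "g \<in> S_set" "f \<noteq> g" for f g
    using S_disj[OF that(1,2)] that(3) unfolding R_def by blast
  have Rsub: "R f \<subseteq> (V \<union> W) - {0}" if "f \<in> S_set" for f
    using S_R_sub[OF that] unfolding R_def V_def W_def by auto
  have cov: "\<exists>f\<in>S_set. z \<in> R f" if "z \<in> (V \<union> W) - {0}" for z
    using cover[of z] that unfolding R_def V_def W_def by auto
  have U: "(\<Union>f\<in>S_set. R f) = (V \<union> W) - {0}" using Rsub cov by blast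
  have "(\<Prod>f\<in>S_set. ac f) = (\<Prod>f\<in>S_set. \<Prod>x\<in>R f. lin x)" using acR by simp
  also have "\<dots> = (\<Prod>x\<in>(\<Union>f\<in>S_set. R f). lin x)"
    by (rule prod.UNION_disjoint[symmetric]) (use fS fR disj in auto)
  also have "\<dots> = (\<Prod>x\<in>(V \<union> W) - {0}. lin x)" using U by simp
  finally have PS: "(\<Prod>f\<in>S_set. ac f) = (\<Prod>x\<in>(V \<union> W) - {0}. lin x)" .
  have "ac (P0 q :: 'a poly) * ac (P1 q :: 'a poly) = (\<Prod>x\<in>V. lin x) * (\<Prod>x\<in>W. lin x)"
    using split_P unfolding V_def W_def lin_def by metis
  also have "\<dots> = (\<Prod>x\<in>V \<union> W. lin x) * (\<Prod>x\<in>V \<inter> W. lin x)"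
    by (rule prod.union_inter[symmetric]) (use fV fW in auto)
  also have "(\<Prod>x\<in>V \<inter> W. lin x) = lin 0" using VW by simp
  also have "(\<Prod>x\<in>V \<union> W. lin x) = lin 0 * (\<Prod>x\<in>(V \<union> W) - {0}. lin x)"
    by (rule prod.remove) (use fV fW V0 in auto)
  finally have "ac (P0 q :: 'a poly) * ac (P1 q :: 'a poly) = lin 0 * lin 0 * (\<Prod>f\<in>S_set. ac f)"
    using PS by (simp add: mult_ac)
  also have "lin 0 * lin 0 = ac (monom 1 2 :: 'a poly)"
    by (simp only: lin_def ac_monom to_ac_1) (simp add: monom_altdef power2_eq_square)
  finally have "ac ((P0 q :: 'a poly) * P1 q) = ac (monom 1 2 * (\<Prod>f\<in>S_set. f))"
    by (simp add: ac_mult ac_prod)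
  hence prodf: "(P0 q :: 'a poly) * P1 q = monom 1 2 * (\<Prod>f\<in>S_set. f)" by (rule ac_inj)
  have count: "card {f \<in> (S_set :: 'a poly set). f dvd P} = (q^3 - 1) div 7"
    if PV: "P = P0 q \<or> P = P1 q" and Xs: "Xs = {z. poly (ac P) z = 0}" and X0: "0 \<in> Xs" and fX: "finite Xs"
    and cX: "card Xs = q^3"
    and Xsub: "Xs \<subseteq> V \<union> W" for P Xs
  proof -
    define S0 where "S0 = {f \<in> (S_set :: 'a poly set). f dvd P}"
    have fS0: "finite S0" using fS unfolding S0_def by simp
    have "(\<Union>f\<in>S0. R f) = Xs - {0}"
    proof
      show "(\<Union>f\<in>S0. R f) \<subseteq> Xs - {0}"
      proof
        fix x assume "x \<in> (\<Union>f\<in>S0. R f)"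
        then obtain f where f: "f \<in> S_set" "f dvd P" "x \<in> R f" unfolding S0_def by blast
        have "poly (ac P) x = 0" using dvd_roots[OF f(2)] f(3) unfolding R_def by simp
        moreover have "x \<noteq> 0" using Rsub[OF f(1)] f(3) by auto
        ultimately show "x \<in> Xs - {0}" using Xs by simp
      qed
    next
      show "Xs - {0} \<subseteq> (\<Union>f\<in>S0. R f)"
      proof
        fix x assume x: "x \<in> Xs - {0}"
        then obtain f where f: "f \<in> S_set" "x \<in> R f" using cov Xsub by blast
        have "f dvd P" using irr_common_root_dvd[OF S_irr[OF f(1)], of x P] f(2) x Xs
          unfolding R_def by simp
        thus "x \<in> (\<Union>f\<in>S0. R f)" using f unfolding S0_def by blast
      qed
    qed
    hence "card (Xs - {0}) = card (\<Union>f\<in>S0. R f)" by simp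
    also have "\<dots> = (\<Sum>f\<in>S0. card (R f))"
      by (rule card_UN_disjoint) (use fS0 fR disj in \<open>auto simp: S0_def\<close>)
    also have "\<dots> = 7 * card S0" using cR by (simp add: S0_def)
    finally have "7 * card S0 = q^3 - 1" using X0 fX cX by simp
    thus ?thesis unfolding S0_def by simp
  qed
  have c0: "card {f \<in> (S_set :: 'a poly set). f dvd P0 q} = (q^3 - 1) div 7"
    by (rule count[of _ V]) (use V_def V0 fV split_P in auto)
  have c1: "card {f \<in> (S_set :: 'a poly set). f dvd P1 q} = (q^3 - 1) div 7"
    by (rule count[of _ W]) (use W_def W0 fW split_P in auto)
  show ?thesis using prodf c0 c1 by blast
qed

end

theorem lemma1p10:
  fixes q :: nat
  assumes "q = card (UNIV :: 'a::{field,finite} set)"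
    and "\<exists>m. q = 2 ^ m"
  shows "(P0 q :: 'a poly) * P1 q = monom 1 2 * (\<Prod>f\<in>S_set. f)
       \<and> card {f \<in> (S_set :: 'a poly set). f dvd P0 q} = (q^3 - 1) div 7
       \<and> card {f \<in> (S_set :: 'a poly set). f dvd P1 q} = (q^3 - 1) div 7"
proof -
  obtain m where m: "q = 2 ^ m" using assms(2) by blast
  interpret fq m q "TYPE('a)"
    by unfold_locales (use assms m in auto)
  show ?thesis by (rule main)
qed

end
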